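(* Let $S\in\mathbb N$, $I\in\mathbb N$, $\eta>0$, $\kappa_r>0$, $\lambda>0$, and let $\rho_b,\rho_d,\kappa_i:\mathbb N\to[0,\infty)$ be bounded with $\rho_b(0)=\rho_d(0)=\kappa_i(0)=0$. Let $\mathbf X=\{0,\dots,S\}\times\mathbb N\times\{0,\dots,S+I\}$. Suppose $v:\mathbb N\to\mathbb R$ is bounded and satisfies, for every $c\in\mathbb N$, $v(c)=\min\Big\{\frac{\rho_b(c)v(c+1)+\rho_d(c)v(c-1)+\frac{\kappa_i(c)}{\eta+\kappa_r}}{\eta+\rho_b(c)+\rho_d(c)+\kappa_i(c)};\ \lambda\Big\}\qquad(\ast)$ (the term $\rho_d(0)v(-1)$ being $0$). Then $V(s,c,i)=s\,v(c)+\frac{i}{\eta+\kappa_r}$ is a bounded solution on $\mathbf X$ of the system $(\ast\ast)$: for $s\ge1$, $\min\Big\{-\eta V(s,c,i)+\rho_b(c)V(s,c+1,i)+\rho_d(c)V(s,c-1,i)+s\kappa_i(c)V(s-1,c,i+1)+i\kappa_rV(s,c,i-1)-V(s,c,i)[\rho_b(c)+\rho_d(c)+s\kappa_i(c)+i\kappa_r]+i;\ -V(s,c,i)+V(s-1,c,i)+\lambda\Big\}=0,$ and for $s=0$, $-\eta V(0,c,i)+\rho_b(c)V(0,c+1,i)+\rho_d(c)V(0,c-1,i)+i\kappa_rV(0,c,i-1)-V(0,c,i)[\rho_b(c)+\rho_d(c)+i\kappa_r]+i=0$ (terms with a zero coefficient are taken to be $0$). Moreover, for $(s,c,i)\in\mathbf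 X$ with $s\ge1$, the first (respectively, second) expression inside the minimum in $(\ast)$ equals $v(c)$ if and only if the first (respectively, second) expression inside the minimum in $(\ast\ast)$ equals zero.
   Context: This is the Bellman equation of an epidemic model with carriers: state $(s,c,i)$ = numbers of susceptibles, carriers and infectives; carriers follow a birth-death process with rates $\rho_b(c),\rho_d(c)$; each susceptible becomes infective at rate $\kappa_i(c)$; each infective recovers at rate $\kappa_r$; cost rate $i$; impulsive action immunizes one susceptible $(s,c,i)\to(s-1,c,i)$ at cost $\lambda$; discount factor $\eta$. *)

theory Defs
  imports "HOL-Analysis.Analysis"
begin

definition scalar_rhs ::
  "real \<Rightarrow> real \<Rightarrow> (nat \<Rightarrow> real) \<Rightarrow> (nat \<Rightarrow> real) \<Rightarrow> (nat \<Rightarrow> real) \<Rightarrow> (nat \<Rightarrow> real) \<Rightarrow> nat \<Rightarrow> real" where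
  "scalar_rhs \<eta> \<kappa>r \<rho>b \<rho>d \<kappa>i v c =
     (\<rho>b c * v (c + 1) + (if c = 0 then 0 else \<rho>d c * v (c - 1)) + \<kappa>i c / (\<eta> + \<kappa>r))
     / (\<eta> + \<rho>b c + \<rho>d c + \<kappa>i c)"

definition Vfun :: "real \<Rightarrow> real \<Rightarrow> (nat \<Rightarrow> real) \<Rightarrow> nat \<Rightarrow> nat \<Rightarrow> nat \<Rightarrow> real" where
  "Vfun \<eta> \<kappa>r v s c i = real s * v c + real i / (\<eta> + \<kappa>r)"

definition cont_expr ::
  "real \<Rightarrow> real \<Rightarrow> (nat \<Rightarrow> real) \<Rightarrow> (nat \<Rightarrow> real) \<Rightarrow> (nat \<Rightarrow> real)
   \<Rightarrow> (nat \<Rightarrow> nat \<Rightarrow> nat \<Rightarrow> real) \<Rightarrow> nat \<Rightarrow> nat \<Rightarrow> nat \<Rightarrow> real" where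
  "cont_expr \<eta> \<kappa>r \<rho>b \<rho>d \<kappa>i V s c i =
     - \<eta> * V s c i + \<rho>b c * V s (c + 1) i
     + (if c = 0 then 0 else \<rho>d c * V s (c - 1) i)
     + (if s = 0 then 0 else real s * \<kappa>i c * V (s - 1) c (i + 1))
     + (if i = 0 then 0 else real i * \<kappa>r * V s c (i - 1))
     - V s c i * (\<rho>b c + \<rho>d c + real s * \<kappa>i c + real i * \<kappa>r) + real i"

definition interv_expr ::
  "real \<Rightarrow> (nat \<Rightarrow> nat \<Rightarrow> nat \<Rightarrow> real) \<Rightarrow> nat \<Rightarrow> nat \<Rightarrow> nat \<Rightarrow> real" where
  "interv_expr lam V s c i = - V s c i + V (s - 1) c i + lam"

definition stateX :: "nat \<Rightarrow> nat \<Rightarrow> (nat \<times> nat \<times> nat) set" where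
  "stateX S I = {0..S} \<times> UNIV \<times> {0..S + I}"

end

theory Submission
  imports Defs
begin

lemma cont_key:
  fixes \<eta> \<kappa>r :: real and \<rho>b \<rho>d \<kappa>i v :: "nat \<Rightarrow> real"
  assumes "\<eta> > 0" "\<kappa>r > 0" "\<rho>d 0 = 0"
    and "\<eta> + \<rho>b c + \<rho>d c + \<kappa>i c > 0"
  shows "cont_expr \<eta> \<kappa>r \<rho>b \<rho>d \<kappa>i (Vfun \<eta> \<kappa>r v) s c i
     = real s * (\<eta> + \<rho>b c + \<rho>d c + \<kappa>i c) * (scalar_rhs \<eta> \<kappa>r \<rho>b \<rho>d \<kappa>i v c - v c)"
proof -
  define D where "D = \<eta> + \<rho>b c + \<rho>d c + \<kappa>i c"
  have D: "D > 0" using assms(4) D_def by simp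
  have e: "\<eta> + \<kappa>r \<noteq> 0" using assms by simp
  define w where "w = (if c = 0 then 0 else \<rho>d c * v (c - 1))"
  have w2: "(if c = 0 then 0 else \<rho>d c * (real s * v (c - 1) + real i / (\<eta> + \<kappa>r)))
      = real s * w + \<rho>d c * real i / (\<eta> + \<kappa>r)"
    using assms(3) by (simp add: w_def algebra_simps)
  have sr: "D * scalar_rhs \<eta> \<kappa>r \<rho>b \<rho>d \<kappa>i v c = \<rho>b c * v (c + 1) + w + \<kappa>i c / (\<eta> + \<kappa>r)"
    using D unfolding scalar_rhs_def D_def w_def by simp
  have s1: "(if s = 0 then 0 else real s * \<kappa>i c * (real (s - 1) * v c + real (i + 1) / (\<eta> + \<kappa>r)))
     = real s * \<kappa>i c * ((real s - 1) * v c + (real i + 1) / (\<eta> + \<kappa>r))"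
    by (cases s) (auto simp: algebra_simps)
  have i1: "(if i = 0 then 0 else real i * \<kappa>r * (real s * v c + real (i - 1) / (\<eta> + \<kappa>r)))
     = real i * \<kappa>r * (real s * v c + (real i - 1) / (\<eta> + \<kappa>r))"
    by (cases i) (auto simp: algebra_simps)
  define a where "a = 1 / (\<eta> + \<kappa>r)"
  have a1: "(\<eta> + \<kappa>r) * a = 1" using e a_def by simp
  have dv: "\<And>x. x / (\<eta> + \<kappa>r) = x * a" unfolding a_def by simp
  have "cont_expr \<eta> \<kappa>r \<rho>b \<rho>d \<kappa>i (Vfun \<eta> \<kappa>r v) s c i
      = real s * (\<rho>b c * v (c + 1) + w + \<kappa>i c * a - D * v c) + real i * (1 - (\<eta> + \<kappa>r) * a)"
    unfolding cont_expr_def Vfun_def w2 s1 i1 D_def dv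
    using assms(3) by (simp add: algebra_simps w_def)
  also have "\<dots> = real s * (\<rho>b c * v (c + 1) + w + \<kappa>i c / (\<eta> + \<kappa>r) - D * v c)"
    using a1 dv by simp
  also have "\<dots> = real s * D * (scalar_rhs \<eta> \<kappa>r \<rho>b \<rho>d \<kappa>i v c - v c)"
    by (simp only: sr[symmetric]) (simp add: algebra_simps)
  finally show ?thesis unfolding D_def .
qed

theorem lemma5p1:
  fixes S I :: nat and \<eta> \<kappa>r lam :: real
    and \<rho>b \<rho>d \<kappa>i v :: "nat \<Rightarrow> real"
  assumes "\<eta> > 0" and "\<kappa>r > 0" and "lam > 0"
    and "\<forall>c. \<rho>b c \<ge> 0" and "\<forall>c. \<rho>d c \<ge> 0" and "\<forall>c. \<kappa>i c \<ge> 0"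
    and "bounded (range \<rho>b)" and "bounded (range \<rho>d)" and "bounded (range \<kappa>i)"
    and "\<rho>b 0 = 0" and "\<rho>d 0 = 0" and "\<kappa>i 0 = 0"
    and "bounded (range v)"
    and "\<forall>c. v c = min (scalar_rhs \<eta> \<kappa>r \<rho>b \<rho>d \<kappa>i v c) lam"
  shows "bounded ((\<lambda>(s, c, i). Vfun \<eta> \<kappa>r v s c i) ` stateX S I)
    \<and> (\<forall>(s, c, i) \<in> stateX S I. s \<ge> 1 \<longrightarrow>
          min (cont_expr \<eta> \<kappa>r \<rho>b \<rho>d \<kappa>i (Vfun \<eta> \<kappa>r v) s c i)
              (interv_expr lam (Vfun \<eta> \<kappa>r v) s c i) = 0)
    \<and> (\<forall>(s, c, i) \<in> stateX S I. s = 0 \<longrightarrow>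
          cont_expr \<eta> \<kappa>r \<rho>b \<rho>d \<kappa>i (Vfun \<eta> \<kappa>r v) s c i = 0)
    \<and> (\<forall>(s, c, i) \<in> stateX S I. s \<ge> 1 \<longrightarrow>
          ((scalar_rhs \<eta> \<kappa>r \<rho>b \<rho>d \<kappa>i v c = v c) \<longleftrightarrow>
             (cont_expr \<eta> \<kappa>r \<rho>b \<rho>d \<kappa>i (Vfun \<eta> \<kappa>r v) s c i = 0))
        \<and> ((lam = v c) \<longleftrightarrow> (interv_expr lam (Vfun \<eta> \<kappa>r v) s c i = 0)))"
proof -
  have Dp: "\<And>c. \<eta> + \<rho>b c + \<rho>d c + \<kappa>i c > 0" using assms(1,4,5,6)
    by (smt (verit))
  have key: "\<And>s c i. cont_expr \<eta> \<kappa>r \<rho>b \<rho>d \<kappa>i (Vfun \<eta> \<kappa>r v) s c i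
     = real s * (\<eta> + \<rho>b c + \<rho>d c + \<kappa>i c) * (scalar_rhs \<eta> \<kappa>r \<rho>b \<rho>d \<kappa>i v c - v c)"
    by (rule cont_key) (use assms Dp in auto)
  have iv: "\<And>s c i. s \<ge> 1 \<Longrightarrow> interv_expr lam (Vfun \<eta> \<kappa>r v) s c i = lam - v c"
    unfolding interv_expr_def Vfun_def by (simp add: of_nat_diff algebra_simps)
  have ge1: "\<And>c. scalar_rhs \<eta> \<kappa>r \<rho>b \<rho>d \<kappa>i v c \<ge> v c" and ge2: "\<And>c. lam \<ge> v c"
    and eq: "\<And>c. v c = scalar_rhs \<eta> \<kappa>r \<rho>b \<rho>d \<kappa>i v c \<or> v c = lam"
    using assms(14) by (metis min.cobounded1 min.cobounded2 min_def)+
  obtain B where B: "\<And>c. \<bar>v c\<bar> \<le> B"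
    using assms(13) unfolding bounded_iff by auto
  have bnd: "bounded ((\<lambda>(s, c, i). Vfun \<eta> \<kappa>r v s c i) ` stateX S I)"
    unfolding bounded_iff
  proof (intro exI ballI)
    fix x assume "x \<in> (\<lambda>(s, c, i). Vfun \<eta> \<kappa>r v s c i) ` stateX S I"
    then obtain s c i where x: "x = Vfun \<eta> \<kappa>r v s c i" and s: "s \<le> S" and i: "i \<le> S + I"
      unfolding stateX_def by auto
    have "\<bar>real s * v c\<bar> \<le> real S * B"
      using s B[of c] by (simp add: abs_mult mult_mono)
    moreover have "\<bar>real i / (\<eta> + \<kappa>r)\<bar> \<le> real (S + I) / (\<eta> + \<kappa>r)"
      using i assms(1,2) by (simp add: divide_right_mono)
    ultimately show "norm x \<le> real S * B + real (S + I) / (\<eta> + \<kappa>r)"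
      unfolding x Vfun_def real_norm_def by (smt (verit))
  qed
  have pos: "\<And>s c. s \<ge> 1 \<Longrightarrow> real s * (\<eta> + \<rho>b c + \<rho>d c + \<kappa>i c) > 0"
    using Dp by simp
  have A: "min (cont_expr \<eta> \<kappa>r \<rho>b \<rho>d \<kappa>i (Vfun \<eta> \<kappa>r v) s c i)
              (interv_expr lam (Vfun \<eta> \<kappa>r v) s c i) = 0" if s: "1 \<le> s" for s c i
  proof -
    have p: "real s * (\<eta> + \<rho>b c + \<rho>d c + \<kappa>i c) > 0" using pos[OF s] .
    show ?thesis
    proof (cases "v c = lam")
      case True
      have "0 \<le> real s * (\<eta> + \<rho>b c + \<rho>d c + \<kappa>i c) * (scalar_rhs \<eta> \<kappa>r \<rho>b \<rho>d \<kappa>i v c - v c)"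
        using p ge1[of c] by simp
      then show ?thesis using True by (simp add: key iv[OF s])
    next
      case False
      then have "v c = scalar_rhs \<eta> \<kappa>r \<rho>b \<rho>d \<kappa>i v c" using eq[of c] by blast
      then show ?thesis using ge2[of c] by (simp add: key iv[OF s])
    qed
  qed
  have B: "cont_expr \<eta> \<kappa>r \<rho>b \<rho>d \<kappa>i (Vfun \<eta> \<kappa>r v) 0 c i = 0" for c i
    by (simp add: key)
  have C: "((scalar_rhs \<eta> \<kappa>r \<rho>b \<rho>d \<kappa>i v c = v c) \<longleftrightarrow>
             (cont_expr \<eta> \<kappa>r \<rho>b \<rho>d \<kappa>i (Vfun \<eta> \<kappa>r v) s c i = 0))
        \<and> ((lam = v c) \<longleftrightarrow> (interv_expr lam (Vfun \<eta> \<kappa>r v) s c i = 0))" if s: "1 \<le> s" for s c i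
  proof -
    have p: "real s * (\<eta> + \<rho>b c + \<rho>d c + \<kappa>i c) > 0" using pos[OF s] .
    show ?thesis using p s Dp[of c] by (simp add: key iv[OF s])
  qed
  show ?thesis using bnd A B C by blast
qed

end
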